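(* Let $a(x,x')$ be a transition density with respect to $\mu$ on a complete separable metric state space such that $x\mapsto a(x,\cdot)$ is continuous into $L_1(\mu)$. Let $h$ be a probability density and $b\ge0$ a function with $0<\int b h\,d\mu$ and $\sup_xb(x)/\int b(x)h(x)\,d\mu(x)<\infty$, and let $g=B(h,b)$. Let $x_1,\dots,x_N$ be i.i.d. from $h$ and, conditionally on them, let $N_1,\dots,N_N$ (with $\sum_iN_i=N$) be resampling multiplicities for probabilities $\pi_i=b(x_i)/\sum_kb(x_k)$ satisfying, for all $\varepsilon>0$, $$\sup_{J\subset\{1,\dots,N\}}\mathbf P\Big[\Big|\sum_{j\in J}\Big(\frac{N_j}{N}-\pi_j\Big)\Big|>\varepsilon\ \Big|\ x_1,\dots,x_N\Big]\le c_1\exp(-c_2N\varepsilon^2)$$ for constants $c_1,c_2$. Let $E_N(g)=\frac1N\sum_iN_i\delta_{x_i}$. Then for every $\varepsilon>0$, $\mathbf P[\|A^*E_N(g)-A^*g\|_1>\varepsilon]\to0$ exponentially fast in $N$.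
   Context: $B(f,b)(x)=f(x)b(x)/\int f b\,d\mu$ (Bayes operator). $A^*f(x)=\int f(x')a(x',x)\,d\mu(x')$, extended to probability measures, so $A^*E_N(g)(x)=\frac1N\sum_iN_ia(x_i,x)$. $\|\cdot\|_1$ is the $L_1(\mu)$ norm. *)

theory Defs
  imports "HOL-Probability.Probability"
begin

definition transition_density :: "'a measure \<Rightarrow> ('a \<Rightarrow> 'a \<Rightarrow> real) \<Rightarrow> bool" where
  "transition_density M a \<longleftrightarrow>
     (\<lambda>(x, y). a x y) \<in> borel_measurable (M \<Otimes>\<^sub>M M) \<and>
     (\<forall>x y. 0 \<le> a x y) \<and>
     (\<forall>x. integrable M (a x) \<and> (\<integral>y. a x y \<partial>M) = 1)"

definition L1_continuous :: "'a::metric_space measure \<Rightarrow> ('a \<Rightarrow> 'a \<Rightarrow> real) \<Rightarrow> bool" where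
  "L1_continuous M a \<longleftrightarrow>
     (\<forall>x. \<forall>e>0. \<exists>d>0. \<forall>x'. dist x' x < d \<longrightarrow> (\<integral>y. \<bar>a x' y - a x y\<bar> \<partial>M) < e)"

definition prob_density :: "'a measure \<Rightarrow> ('a \<Rightarrow> real) \<Rightarrow> bool" where
  "prob_density M h \<longleftrightarrow>
     h \<in> borel_measurable M \<and> (\<forall>x. 0 \<le> h x) \<and> integrable M h \<and> (\<integral>x. h x \<partial>M) = 1"

definition bayes :: "'a measure \<Rightarrow> ('a \<Rightarrow> real) \<Rightarrow> ('a \<Rightarrow> real) \<Rightarrow> 'a \<Rightarrow> real" where
  "bayes M f b x = f x * b x / (\<integral>y. f y * b y \<partial>M)"

definition Astar :: "'a measure \<Rightarrow> ('a \<Rightarrow> 'a \<Rightarrow> real) \<Rightarrow> ('a \<Rightarrow> real) \<Rightarrow> 'a \<Rightarrow> real" where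
  "Astar M a f x = (\<integral>x'. f x' * a x' x \<partial>M)"

text \<open>A* applied to the empirical measure (1/N) sum_i N_i delta_{x_i},
  points xs 0..N-1, multiplicities n 0..N-1.\<close>
definition Astar_emp :: "('a \<Rightarrow> 'a \<Rightarrow> real) \<Rightarrow> nat \<Rightarrow> (nat \<Rightarrow> 'a) \<Rightarrow> (nat \<Rightarrow> nat) \<Rightarrow> 'a \<Rightarrow> real" where
  "Astar_emp a N xs n x = (1 / real N) * (\<Sum>i<N. real (n i) * a (xs i) x)"

definition mult_space :: "nat \<Rightarrow> (nat \<Rightarrow> nat) measure" where
  "mult_space N = PiM {..<N} (\<lambda>_. count_space UNIV)"

definition sample_law :: "'a measure \<Rightarrow> ('a \<Rightarrow> real) \<Rightarrow> nat \<Rightarrow> (nat \<Rightarrow> 'a) measure" where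
  "sample_law M h N = PiM {..<N} (\<lambda>_. density M (\<lambda>x. ennreal (h x)))"

definition resample_prob :: "('a \<Rightarrow> real) \<Rightarrow> nat \<Rightarrow> (nat \<Rightarrow> 'a) \<Rightarrow> nat \<Rightarrow> real" where
  "resample_prob b N xs i = b (xs i) / (\<Sum>k<N. b (xs k))"

end

theory Submission
  imports Defs
begin

locale kern =
  fixes \<mu> :: "'a measure" and a :: "'a \<Rightarrow> 'a \<Rightarrow> real"
  assumes sf: "sigma_finite_measure \<mu>"
  and a_meas: "(\<lambda>(x,y). a x y) \<in> borel_measurable (\<mu> \<Otimes>\<^sub>M \<mu>)"
  and a_nn: "\<And>x y. 0 \<le> a x y"
  and a_int: "\<And>x. integrable \<mu> (a x)"
  and a_one: "\<And>x. (\<integral>y. a x y \<partial>\<mu>) = 1"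
  and space_UNIV: "space \<mu> = UNIV"
begin

sublocale S: sigma_finite_measure \<mu> by (rule sf)
sublocale P: pair_sigma_finite \<mu> \<mu> by unfold_locales

lemma a_meas'[measurable (raw)]:
  assumes [measurable]: "f \<in> measurable M \<mu>" "g \<in> measurable M \<mu>"
  shows "(\<lambda>x. a (f x) (g x)) \<in> borel_measurable M"
proof -
  have "(\<lambda>x. (f x, g x)) \<in> measurable M (\<mu> \<Otimes>\<^sub>M \<mu>)" by measurable
  from measurable_compose[OF this a_meas] show ?thesis by simp
qed

lemma a_nn_one: "(\<integral>\<^sup>+y. ennreal (a x y) \<partial>\<mu>) = 1"
  using nn_integral_eq_integral[OF a_int, of x] a_nn a_one by simp

lemma in_space[measurable, simp]: "x \<in> space \<mu>"
  by (simp add: space_UNIV)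

lemma a_meas_snd[measurable]: "(\<lambda>y. a x y) \<in> borel_measurable \<mu>"
  by measurable

lemma g_integrable_AE:
  fixes g :: "'a \<Rightarrow> real"
  assumes [measurable]: "g \<in> borel_measurable \<mu>" and g_nn: "\<And>x. 0 \<le> g x"
    and g_int: "integrable \<mu> g"
  shows "AE y in \<mu>. integrable \<mu> (\<lambda>x. g x * a x y)"
proof -
  have "(\<integral>\<^sup>+y. (\<integral>\<^sup>+x. ennreal (g x * a x y) \<partial>\<mu>) \<partial>\<mu>) = (\<integral>\<^sup>+x. (\<integral>\<^sup>+y. ennreal (g x * a x y) \<partial>\<mu>) \<partial>\<mu>)"
    by (rule P.Fubini') measurable
  also have "\<dots> = (\<integral>\<^sup>+x. ennreal (g x) * (\<integral>\<^sup>+y. ennreal (a x y) \<partial>\<mu>) \<partial>\<mu>)"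
    by (intro nn_integral_cong) (simp add: ennreal_mult g_nn a_nn nn_integral_cmult)
  also have "\<dots> = (\<integral>\<^sup>+x. ennreal (g x) \<partial>\<mu>)" by (simp add: a_nn_one)
  also have "\<dots> < \<infinity>" using g_int g_nn by (simp add: integrable_iff_bounded)
  finally have fin: "(\<integral>\<^sup>+y. (\<integral>\<^sup>+x. ennreal (g x * a x y) \<partial>\<mu>) \<partial>\<mu>) \<noteq> \<infinity>" by simp
  have "AE y in \<mu>. (\<integral>\<^sup>+x. ennreal (g x * a x y) \<partial>\<mu>) \<noteq> \<infinity>"
    by (rule nn_integral_PInf_AE[OF _ fin]) measurable
  then show ?thesis
  proof (rule AE_mp, intro AE_I2 impI)
    fix y assume "(\<integral>\<^sup>+x. ennreal (g x * a x y) \<partial>\<mu>) \<noteq> \<infinity>"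
    then show "integrable \<mu> (\<lambda>x. g x * a x y)"
      by (intro integrableI_bounded) (auto simp: g_nn a_nn top.not_eq_extremum)
  qed
qed

end

lemma int_ind:
  fixes f :: "'b \<Rightarrow> real"
  shows "A \<in> sets M \<Longrightarrow> integrable M f \<Longrightarrow> integrable M (\<lambda>x. indicator A x * f x)"
  using integrable_real_mult_indicator[of A M f] by (simp add: mult.commute)

context kern begin

lemma bochner_le_of_nn:
  fixes f :: "'a \<Rightarrow> real"
  assumes [measurable]: "f \<in> borel_measurable \<mu>" and nn: "\<And>x. 0 \<le> f x"
    and le: "(\<integral>\<^sup>+x. ennreal (f x) \<partial>\<mu>) \<le> ennreal r" and r: "0 \<le> r"
  shows "(\<integral>x. f x \<partial>\<mu>) \<le> r"
proof -
  have "(\<integral>x. f x \<partial>\<mu>) = enn2real (\<integral>\<^sup>+x. ennreal (f x) \<partial>\<mu>)"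
    by (rule integral_eq_nn_integral) (auto simp: nn)
  also have "\<dots> \<le> enn2real (ennreal r)"
    using le by (intro enn2real_mono) auto
  finally show ?thesis using r by simp
qed

lemma L1_core:
  fixes g :: "'a \<Rightarrow> real" and A :: "nat \<Rightarrow> 'a set" and s :: "nat \<Rightarrow> 'a"
    and M N :: nat and xs :: "nat \<Rightarrow> 'a" and n :: "nat \<Rightarrow> nat" and \<delta> :: real
  assumes g_meas[measurable]: "g \<in> borel_measurable \<mu>" and g_nn: "\<And>x. 0 \<le> g x"
    and g_int: "integrable \<mu> g" and g_one: "(\<integral>x. g x \<partial>\<mu>) = 1"
    and A_sets[measurable]: "\<And>k. A k \<in> sets \<mu>" and A_disj: "disjoint_family_on A {..<M}"
    and close: "\<And>k x. k < M \<Longrightarrow> x \<in> A k \<Longrightarrow> (\<integral>y. \<bar>a x y - a (s k) y\<bar> \<partial>\<mu>) \<le> \<delta>"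
    and tail: "(\<integral>x. indicator (- (\<Union>k<M. A k)) x * g x \<partial>\<mu>) \<le> \<delta>"
    and N1: "1 \<le> N" and nsum: "(\<Sum>i<N. n i) = N"
  shows "(\<integral>y. \<bar>Astar_emp a N xs n y - Astar \<mu> a g y\<bar> \<partial>\<mu>)
     \<le> 4 * \<delta> + 2 * (\<Sum>k<M. \<bar>(\<Sum>i<N. real (n i) / real N * indicator (A k) (xs i))
                              - (\<integral>x. indicator (A k) x * g x \<partial>\<mu>)\<bar>)"
proof -
  define R where "R = - (\<Union>k<M. A k)"
  have R_sets[measurable]: "R \<in> sets \<mu>"
  proof -
    have "R = space \<mu> - (\<Union>k<M. A k)" by (simp add: R_def space_UNIV Compl_eq_Diff_UNIV)
    also have "\<dots> \<in> sets \<mu>" by measurable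
    finally show ?thesis .
  qed
  define c where "c i = real (n i) / real N" for i
  define w where "w k = (\<Sum>i<N. c i * indicator (A k) (xs i))" for k
  define gk where "gk k = (\<integral>x. indicator (A k) x * g x \<partial>\<mu>)" for k
  define wR where "wR = (\<Sum>i<N. c i * indicator R (xs i))"
  define gR where "gR = (\<integral>x. indicator R x * g x \<partial>\<mu>)"
  have c_nn: "0 \<le> c i" for i by (simp add: c_def)
  have c_sum: "(\<Sum>i<N. c i) = 1"
    using N1 nsum by (simp add: c_def sum_divide_distrib[symmetric] flip: of_nat_sum)
  have gR_nn: "0 \<le> gR" unfolding gR_def by (intro integral_nonneg_AE) (auto simp: g_nn)
  have \<delta>_nn: "0 \<le> \<delta>" using tail gR_nn by (simp add: gR_def R_def)
  have part_one: "(\<Sum>k<M. indicator (A k) x) + indicator R x = (1::real)" for x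
  proof (cases "x \<in> R")
    case True
    then have "\<forall>k<M. x \<notin> A k" by (auto simp: R_def)
    then show ?thesis using True by (simp add: indicator_def)
  next
    case False
    then obtain j where j: "j < M" "x \<in> A j" by (auto simp: R_def)
    have "(\<Sum>k<M. indicator (A k) x) = (\<Sum>k<M. if k = j then 1 else (0::real))"
    proof (intro sum.cong refl)
      fix k assume "k \<in> {..<M}"
      then show "indicator (A k) x = (if k = j then 1 else (0::real))"
        using A_disj j unfolding disjoint_family_on_def by (auto simp: indicator_def)
    qed
    also have "\<dots> = 1" using j by simp
    finally show ?thesis using False by simp
  qed
  have wR_eq: "wR = 1 - (\<Sum>k<M. w k)"
  proof -
    have "(\<Sum>k<M. w k) + wR = (\<Sum>i<N. (\<Sum>k<M. c i * indicator (A k) (xs i)) + c i * indicator R (xs i))"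
      unfolding w_def wR_def by (subst sum.swap) (simp only: sum.distrib)
    also have "\<dots> = (\<Sum>i<N. c i * ((\<Sum>k<M. indicator (A k) (xs i)) + indicator R (xs i)))"
      by (simp only: sum_distrib_left distrib_left)
    also have "\<dots> = 1" by (simp add: part_one c_sum)
    finally show ?thesis by simp
  qed
  have gR_eq: "gR = 1 - (\<Sum>k<M. gk k)"
  proof -
    have isum: "(\<integral>x. (\<Sum>k<M. indicator (A k) x * g x) \<partial>\<mu>) = (\<Sum>k<M. (\<integral>x. indicator (A k) x * g x \<partial>\<mu>))"
      by (rule Bochner_Integration.integral_sum) (auto intro: int_ind g_int)
    have "(\<Sum>k<M. gk k) + gR = (\<integral>x. (\<Sum>k<M. indicator (A k) x * g x) + indicator R x * g x \<partial>\<mu>)"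
      unfolding gk_def gR_def
      by (subst Bochner_Integration.integral_add[OF Bochner_Integration.integrable_sum int_ind])
         (auto intro!: int_ind g_int A_sets R_sets simp only: isum)
    also have "\<dots> = (\<integral>x. g x \<partial>\<mu>)"
      proof (rule Bochner_Integration.integral_cong[OF refl])
      fix x
      have "(\<Sum>k<M. indicator (A k) x * g x) + indicator R x * g x = ((\<Sum>k<M. indicator (A k) x) + indicator R x) * g x"
        by (simp only: sum_distrib_right distrib_right)
      then show "(\<Sum>k<M. indicator (A k) x * g x) + indicator R x * g x = g x" by (simp only: part_one mult_1)
    qed
    finally show ?thesis using g_one by simp
  qed

  define ak where "ak x y = (\<Sum>k<M. indicator (A k) x * a (s k) y) + indicator R x * a x y" for x y
  have ak_meas[measurable]: "(\<lambda>(x, y). ak x y) \<in> borel_measurable (\<mu> \<Otimes>\<^sub>M \<mu>)"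
    unfolding ak_def by measurable
  have ak_meas2[measurable]: "(\<lambda>y. ak x y) \<in> borel_measurable \<mu>" for x
    unfolding ak_def by measurable
  have ak_A: "ak x y = a (s j) y" if j: "j < M" "x \<in> A j" for x y j
  proof -
    have "(\<Sum>k<M. indicator (A k) x * a (s k) y) = (\<Sum>k<M. if k = j then a (s j) y else 0)"
    proof (intro sum.cong refl)
      fix k assume "k \<in> {..<M}"
      then show "indicator (A k) x * a (s k) y = (if k = j then a (s j) y else 0)"
        using A_disj j unfolding disjoint_family_on_def by (auto simp: indicator_def)
    qed
    also have "\<dots> = a (s j) y" using j by simp
    finally have "(\<Sum>k<M. indicator (A k) x * a (s k) y) = a (s j) y" .
    moreover have "x \<notin> R" using j by (auto simp: R_def)
    ultimately show ?thesis by (simp add: ak_def)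
  qed
  have ak_R: "ak x y = a x y" if "x \<in> R" for x y
  proof -
    from that have "\<forall>k<M. x \<notin> A k" by (auto simp: R_def)
    then show ?thesis using that by (simp add: ak_def indicator_def)
  qed
  have ak_int: "integrable \<mu> (\<lambda>y. ak x y)" for x
    unfolding ak_def by (intro Bochner_Integration.integrable_add Bochner_Integration.integrable_sum Bochner_Integration.integrable_mult_right a_int)
  have close2: "(\<integral>y. \<bar>a x y - ak x y\<bar> \<partial>\<mu>) \<le> \<delta>" for x
  proof (cases "x \<in> R")
    case True
    then show ?thesis using \<delta>_nn by (simp add: ak_R)
  next
    case False
    then obtain j where j: "j < M" "x \<in> A j" by (auto simp: R_def)
    then show ?thesis using close[OF j] by (simp add: ak_A[OF j])
  qed
  have close3: "(\<integral>\<^sup>+y. ennreal \<bar>a x y - ak x y\<bar> \<partial>\<mu>) \<le> ennreal \<delta>" for x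
  proof -
    have "(\<integral>\<^sup>+y. ennreal \<bar>a x y - ak x y\<bar> \<partial>\<mu>) = ennreal (\<integral>y. \<bar>a x y - ak x y\<bar> \<partial>\<mu>)"
      by (intro nn_integral_eq_integral Bochner_Integration.integrable_abs Bochner_Integration.integrable_diff a_int ak_int) auto
    then show ?thesis using close2[of x] by (simp add: ennreal_leI)
  qed
  define P1 where "P1 y = (\<Sum>i<N. c i * \<bar>a (xs i) y - ak (xs i) y\<bar>)" for y
  define P3 where "P3 y = (\<Sum>k<M. \<bar>w k - gk k\<bar> * a (s k) y) + (\<Sum>i<N. c i * indicator R (xs i) * a (xs i) y)" for y
  have P1_nn: "0 \<le> P1 y" for y unfolding P1_def by (intro sum_nonneg mult_nonneg_nonneg c_nn) auto
  have P3_nn: "0 \<le> P3 y" for y unfolding P3_def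
    by (intro add_nonneg_nonneg sum_nonneg mult_nonneg_nonneg c_nn a_nn) auto
  have pw: "AE y in \<mu>. ennreal \<bar>Astar_emp a N xs n y - Astar \<mu> a g y\<bar> \<le>
      ennreal (P1 y) + (\<integral>\<^sup>+x. ennreal (g x * \<bar>a x y - ak x y\<bar>) \<partial>\<mu>) + ennreal (P3 y)
      + (\<integral>\<^sup>+x. ennreal (indicator R x * g x * a x y) \<partial>\<mu>)"
    using g_integrable_AE[OF g_meas g_nn g_int]
  proof (rule AE_mp, intro AE_I2 impI)
    fix y assume Iy: "integrable \<mu> (\<lambda>x. g x * a x y)"
    have eq_gak: "g x * ak x y = (\<Sum>k<M. a (s k) y * (indicator (A k) x * g x)) + indicator R x * (g x * a x y)" for x
      by (simp only: ak_def distrib_left sum_distrib_left) (simp only: mult_ac)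
    have int_R: "integrable \<mu> (\<lambda>x. indicator R x * (g x * a x y))"
      by (intro int_ind Iy R_sets)
    have int_A: "integrable \<mu> (\<lambda>x. a (s k) y * (indicator (A k) x * g x))" for k
      by (intro Bochner_Integration.integrable_mult_right int_ind g_int A_sets)
    have int_gak: "integrable \<mu> (\<lambda>x. g x * ak x y)"
      unfolding eq_gak by (intro Bochner_Integration.integrable_add Bochner_Integration.integrable_sum int_R int_A)
    have int_T2: "integrable \<mu> (\<lambda>x. g x * (a x y - ak x y))"
      using Bochner_Integration.integrable_diff[OF Iy int_gak] by (simp add: algebra_simps)
    define T2 where "T2 = (\<integral>x. g x * (a x y - ak x y) \<partial>\<mu>)"
    define IR where "IR = (\<integral>x. indicator R x * (g x * a x y) \<partial>\<mu>)"
    have IR_nn: "0 \<le> IR" unfolding IR_def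
      by (intro integral_nonneg_AE AE_I2) (auto simp: g_nn a_nn)
    have G: "Astar \<mu> a g y = T2 + (\<Sum>k<M. gk k * a (s k) y) + IR"
    proof -
      have "Astar \<mu> a g y = (\<integral>x. g x * (a x y - ak x y) + g x * ak x y \<partial>\<mu>)"
        by (simp add: Astar_def algebra_simps)
      also have "\<dots> = T2 + (\<integral>x. g x * ak x y \<partial>\<mu>)"
        unfolding T2_def by (rule Bochner_Integration.integral_add[OF int_T2 int_gak])
      also have "(\<integral>x. g x * ak x y \<partial>\<mu>) = (\<Sum>k<M. gk k * a (s k) y) + IR"
      proof -
        have int_S: "integrable \<mu> (\<lambda>x. \<Sum>k<M. a (s k) y * (indicator (A k) x * g x))"
          by (intro Bochner_Integration.integrable_sum int_A)
        have "(\<integral>x. (\<Sum>k<M. a (s k) y * (indicator (A k) x * g x)) \<partial>\<mu>) = (\<Sum>k<M. (\<integral>x. a (s k) y * (indicator (A k) x * g x) \<partial>\<mu>))"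
          by (rule Bochner_Integration.integral_sum) (rule int_A)
        also have "\<dots> = (\<Sum>k<M. gk k * a (s k) y)"
          by (simp add: gk_def mult.commute)
        finally have isum2: "(\<integral>x. (\<Sum>k<M. a (s k) y * (indicator (A k) x * g x)) \<partial>\<mu>) = (\<Sum>k<M. gk k * a (s k) y)" .
        show ?thesis
          unfolding eq_gak IR_def
          by (simp only: Bochner_Integration.integral_add[OF int_S int_R] isum2)
      qed
      finally show ?thesis by simp
    qed
    have E: "Astar_emp a N xs n y = (\<Sum>i<N. c i * (a (xs i) y - ak (xs i) y))
        + (\<Sum>k<M. w k * a (s k) y) + (\<Sum>i<N. c i * indicator R (xs i) * a (xs i) y)"
    proof -
      have "Astar_emp a N xs n y = (\<Sum>i<N. c i * a (xs i) y)"
        by (simp add: Astar_emp_def c_def sum_distrib_left)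
      also have "\<dots> = (\<Sum>i<N. c i * (a (xs i) y - ak (xs i) y)) + (\<Sum>i<N. c i * ak (xs i) y)"
        by (simp add: sum.distrib[symmetric] algebra_simps)
      also have "(\<Sum>i<N. c i * ak (xs i) y) = (\<Sum>k<M. w k * a (s k) y) + (\<Sum>i<N. c i * indicator R (xs i) * a (xs i) y)"
      proof -
        have "(\<Sum>i<N. c i * ak (xs i) y) = (\<Sum>i<N. \<Sum>k<M. c i * (indicator (A k) (xs i) * a (s k) y)) + (\<Sum>i<N. c i * (indicator R (xs i) * a (xs i) y))"
          by (simp only: ak_def distrib_left sum_distrib_left sum.distrib)
        also have "(\<Sum>i<N. \<Sum>k<M. c i * (indicator (A k) (xs i) * a (s k) y)) = (\<Sum>k<M. w k * a (s k) y)"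
          unfolding w_def by (subst sum.swap) (simp only: sum_distrib_right mult.assoc)
        finally show ?thesis by (simp only: mult.assoc)
      qed
      finally show ?thesis by simp
    qed
    have D: "Astar_emp a N xs n y - Astar \<mu> a g y = (\<Sum>i<N. c i * (a (xs i) y - ak (xs i) y)) - T2
        + (\<Sum>k<M. (w k - gk k) * a (s k) y) + (\<Sum>i<N. c i * indicator R (xs i) * a (xs i) y) - IR"
      unfolding E G by (simp add: sum_subtractf left_diff_distrib)
    have b1: "\<bar>\<Sum>i<N. c i * (a (xs i) y - ak (xs i) y)\<bar> \<le> P1 y"
      unfolding P1_def by (rule order_trans[OF sum_abs]) (simp add: abs_mult c_nn)
    have b3: "\<bar>(\<Sum>k<M. (w k - gk k) * a (s k) y)\<bar> + (\<Sum>i<N. c i * indicator R (xs i) * a (xs i) y) \<le> P3 y"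
      unfolding P3_def by (intro add_mono order_trans[OF sum_abs]) (auto simp: abs_mult a_nn)
    have "\<bar>Astar_emp a N xs n y - Astar \<mu> a g y\<bar> \<le> P1 y + \<bar>T2\<bar> + P3 y + IR"
    proof -
      have "0 \<le> (\<Sum>i<N. c i * indicator R (xs i) * a (xs i) y)"
        by (intro sum_nonneg mult_nonneg_nonneg c_nn a_nn) auto
      then show ?thesis unfolding D using b1 b3 IR_nn by linarith
    qed
    then have "ennreal \<bar>Astar_emp a N xs n y - Astar \<mu> a g y\<bar> \<le> ennreal (P1 y) + ennreal \<bar>T2\<bar> + ennreal (P3 y) + ennreal IR"
      using P1_nn P3_nn IR_nn by (simp add: ennreal_plus[symmetric] ennreal_leI del: ennreal_plus)
    also have "ennreal \<bar>T2\<bar> \<le> (\<integral>\<^sup>+x. ennreal (g x * \<bar>a x y - ak x y\<bar>) \<partial>\<mu>)"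
      using integral_norm_bound_ennreal[OF int_T2] unfolding T2_def by (simp add: abs_mult g_nn)
    also have "ennreal IR \<le> (\<integral>\<^sup>+x. ennreal (indicator R x * g x * a x y) \<partial>\<mu>)"
      using integral_norm_bound_ennreal[OF int_R] unfolding IR_def
      by (simp add: abs_mult g_nn a_nn mult.assoc)
    finally show "ennreal \<bar>Astar_emp a N xs n y - Astar \<mu> a g y\<bar> \<le>
      ennreal (P1 y) + (\<integral>\<^sup>+x. ennreal (g x * \<bar>a x y - ak x y\<bar>) \<partial>\<mu>) + ennreal (P3 y)
      + (\<integral>\<^sup>+x. ennreal (indicator R x * g x * a x y) \<partial>\<mu>)" by (simp add: add_mono)
  qed
  define Sg where "Sg = (\<Sum>k<M. \<bar>w k - gk k\<bar>)"
  have i1: "(\<integral>\<^sup>+y. ennreal (P1 y) \<partial>\<mu>) \<le> ennreal \<delta>"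
  proof -
    have int: "integrable \<mu> (\<lambda>y. \<bar>a (xs i) y - ak (xs i) y\<bar>)" for i
      by (intro Bochner_Integration.integrable_abs Bochner_Integration.integrable_diff a_int ak_int)
    have "(\<integral>\<^sup>+y. ennreal (P1 y) \<partial>\<mu>) = ennreal (\<integral>y. P1 y \<partial>\<mu>)"
      unfolding P1_def
      by (intro nn_integral_eq_integral AE_I2 sum_nonneg mult_nonneg_nonneg c_nn abs_ge_zero
            Bochner_Integration.integrable_sum Bochner_Integration.integrable_mult_right int)
    also have "(\<integral>y. P1 y \<partial>\<mu>) = (\<Sum>i<N. c i * (\<integral>y. \<bar>a (xs i) y - ak (xs i) y\<bar> \<partial>\<mu>))"
      unfolding P1_def
      by (subst Bochner_Integration.integral_sum) (auto intro!: Bochner_Integration.integrable_mult_right int)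
    also have "\<dots> \<le> (\<Sum>i<N. c i * \<delta>)"
      by (intro sum_mono mult_left_mono close2 c_nn)
    also have "\<dots> = \<delta>" by (simp add: sum_distrib_right[symmetric] c_sum)
    finally show ?thesis by (simp add: ennreal_leI)
  qed
  have i2: "(\<integral>\<^sup>+y. (\<integral>\<^sup>+x. ennreal (g x * \<bar>a x y - ak x y\<bar>) \<partial>\<mu>) \<partial>\<mu>) \<le> ennreal \<delta>"
  proof -
    have "(\<integral>\<^sup>+y. (\<integral>\<^sup>+x. ennreal (g x * \<bar>a x y - ak x y\<bar>) \<partial>\<mu>) \<partial>\<mu>)
        = (\<integral>\<^sup>+x. (\<integral>\<^sup>+y. ennreal (g x * \<bar>a x y - ak x y\<bar>) \<partial>\<mu>) \<partial>\<mu>)"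
      by (rule P.Fubini') measurable
    also have "\<dots> = (\<integral>\<^sup>+x. ennreal (g x) * (\<integral>\<^sup>+y. ennreal \<bar>a x y - ak x y\<bar> \<partial>\<mu>) \<partial>\<mu>)"
      by (intro nn_integral_cong) (simp add: ennreal_mult g_nn nn_integral_cmult)
    also have "\<dots> \<le> (\<integral>\<^sup>+x. ennreal (g x) * ennreal \<delta> \<partial>\<mu>)"
      by (intro nn_integral_mono mult_left_mono close3) auto
    also have "\<dots> = (\<integral>\<^sup>+x. ennreal (g x) \<partial>\<mu>) * ennreal \<delta>"
      by (simp add: nn_integral_multc)
    also have "(\<integral>\<^sup>+x. ennreal (g x) \<partial>\<mu>) = 1"
      using nn_integral_eq_integral[OF g_int] g_nn g_one by simp
    finally show ?thesis by simp
  qed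
  have i3: "(\<integral>\<^sup>+y. ennreal (P3 y) \<partial>\<mu>) = ennreal (Sg + wR)"
  proof -
    have "(\<integral>\<^sup>+y. ennreal (P3 y) \<partial>\<mu>) = ennreal (\<integral>y. P3 y \<partial>\<mu>)"
      unfolding P3_def
      by (intro nn_integral_eq_integral AE_I2 add_nonneg_nonneg sum_nonneg mult_nonneg_nonneg c_nn a_nn abs_ge_zero
            Bochner_Integration.integrable_add Bochner_Integration.integrable_sum Bochner_Integration.integrable_mult_right a_int) auto
    also have "(\<integral>y. P3 y \<partial>\<mu>) = Sg + wR"
    proof -
      have 1: "(\<integral>y. (\<Sum>k<M. \<bar>w k - gk k\<bar> * a (s k) y) \<partial>\<mu>) = Sg"
        unfolding Sg_def
        by (subst Bochner_Integration.integral_sum) (auto intro!: Bochner_Integration.integrable_mult_right a_int simp: a_one)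
      have 2: "(\<integral>y. (\<Sum>i<N. c i * indicator R (xs i) * a (xs i) y) \<partial>\<mu>) = wR"
        unfolding wR_def
        by (subst Bochner_Integration.integral_sum) (auto intro!: Bochner_Integration.integrable_mult_right a_int simp: a_one)
      show ?thesis unfolding P3_def
        by (subst Bochner_Integration.integral_add)
          (auto intro!: Bochner_Integration.integrable_sum Bochner_Integration.integrable_mult_right a_int simp only: 1 2)
    qed
    finally show ?thesis .
  qed
  have i4: "(\<integral>\<^sup>+y. (\<integral>\<^sup>+x. ennreal (indicator R x * g x * a x y) \<partial>\<mu>) \<partial>\<mu>) = ennreal gR"
  proof -
    have "(\<integral>\<^sup>+y. (\<integral>\<^sup>+x. ennreal (indicator R x * g x * a x y) \<partial>\<mu>) \<partial>\<mu>)
        = (\<integral>\<^sup>+x. (\<integral>\<^sup>+y. ennreal (indicator R x * g x * a x y) \<partial>\<mu>) \<partial>\<mu>)"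
      by (rule P.Fubini') measurable
    also have "\<dots> = (\<integral>\<^sup>+x. ennreal (indicator R x * g x) * (\<integral>\<^sup>+y. ennreal (a x y) \<partial>\<mu>) \<partial>\<mu>)"
      by (intro nn_integral_cong) (simp add: ennreal_mult g_nn a_nn nn_integral_cmult)
    also have "\<dots> = (\<integral>\<^sup>+x. ennreal (indicator R x * g x) \<partial>\<mu>)"
      by (simp add: a_nn_one)
    also have "\<dots> = ennreal gR" unfolding gR_def
      by (intro nn_integral_eq_integral int_ind g_int R_sets AE_I2) (auto simp: g_nn)
    finally show ?thesis .
  qed
  have meas_D[measurable]: "(\<lambda>y. \<bar>Astar_emp a N xs n y - Astar \<mu> a g y\<bar>) \<in> borel_measurable \<mu>"
    unfolding Astar_emp_def Astar_def by measurable
  have "(\<integral>\<^sup>+y. ennreal \<bar>Astar_emp a N xs n y - Astar \<mu> a g y\<bar> \<partial>\<mu>) \<le>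
      (\<integral>\<^sup>+y. ennreal (P1 y) + (\<integral>\<^sup>+x. ennreal (g x * \<bar>a x y - ak x y\<bar>) \<partial>\<mu>) + ennreal (P3 y)
      + (\<integral>\<^sup>+x. ennreal (indicator R x * g x * a x y) \<partial>\<mu>) \<partial>\<mu>)"
    by (rule nn_integral_mono_AE[OF pw])
  also have "\<dots> = (\<integral>\<^sup>+y. ennreal (P1 y) \<partial>\<mu>) + (\<integral>\<^sup>+y. (\<integral>\<^sup>+x. ennreal (g x * \<bar>a x y - ak x y\<bar>) \<partial>\<mu>) \<partial>\<mu>)
      + (\<integral>\<^sup>+y. ennreal (P3 y) \<partial>\<mu>) + (\<integral>\<^sup>+y. (\<integral>\<^sup>+x. ennreal (indicator R x * g x * a x y) \<partial>\<mu>) \<partial>\<mu>)"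
    unfolding P1_def P3_def by (simp add: nn_integral_add)
  also have "\<dots> \<le> ennreal \<delta> + ennreal \<delta> + ennreal (Sg + wR) + ennreal gR"
    using i1 i2 i3 i4 by (intro add_mono) auto
  also have "\<dots> = ennreal (\<delta> + \<delta> + (Sg + wR) + gR)"
  proof -
    have "0 \<le> Sg" unfolding Sg_def by (intro sum_nonneg) auto
    moreover have "0 \<le> wR" unfolding wR_def by (intro sum_nonneg mult_nonneg_nonneg c_nn) auto
    ultimately show ?thesis using \<delta>_nn gR_nn by (simp add: ennreal_plus[symmetric] add_nonneg_nonneg del: ennreal_plus)
  qed
  also have "\<dots> \<le> ennreal (4 * \<delta> + 2 * Sg)"
  proof (intro ennreal_leI)
    have "wR - gR = (\<Sum>k<M. gk k - w k)" by (simp add: wR_eq gR_eq sum_subtractf)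
    also have "\<dots> \<le> Sg" unfolding Sg_def by (intro sum_mono) auto
    finally show "\<delta> + \<delta> + (Sg + wR) + gR \<le> 4 * \<delta> + 2 * Sg"
      using tail unfolding gR_def R_def by linarith
  qed
  finally have "(\<integral>\<^sup>+y. ennreal \<bar>Astar_emp a N xs n y - Astar \<mu> a g y\<bar> \<partial>\<mu>) \<le> ennreal (4 * \<delta> + 2 * Sg)" .
  moreover have "0 \<le> Sg" unfolding Sg_def by (intro sum_nonneg) auto
  ultimately have "(\<integral>y. \<bar>Astar_emp a N xs n y - Astar \<mu> a g y\<bar> \<partial>\<mu>) \<le> 4 * \<delta> + 2 * Sg"
    using \<delta>_nn by (intro bochner_le_of_nn) auto
  then show ?thesis unfolding Sg_def w_def gk_def c_def .
qed

end

lemma partition_exists: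
  fixes \<mu> :: "'a::polish_space measure" and a :: "'a \<Rightarrow> 'a \<Rightarrow> real" and g :: "'a \<Rightarrow> real"
  assumes sets_mu: "sets \<mu> = sets borel" and a_cont: "L1_continuous \<mu> a" and \<delta>: "0 < \<delta>"
    and g_int: "integrable \<mu> g" and g_nn: "\<And>x. 0 \<le> g x"
  obtains A :: "nat \<Rightarrow> 'a set" and s :: "nat \<Rightarrow> 'a" and M :: nat
  where "\<And>k. A k \<in> sets \<mu>" "disjoint_family_on A {..<M}"
    "\<And>k x. k < M \<Longrightarrow> x \<in> A k \<Longrightarrow> (\<integral>y. \<bar>a x y - a (s k) y\<bar> \<partial>\<mu>) \<le> \<delta>"
    "(\<integral>x. indicator (- (\<Union>k<M. A k)) x * g x \<partial>\<mu>) \<le> \<delta>"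
proof -
  have "\<forall>x. \<exists>d>0. \<forall>x'. dist x' x < d \<longrightarrow> (\<integral>y. \<bar>a x' y - a x y\<bar> \<partial>\<mu>) < \<delta>"
    using a_cont \<delta> unfolding L1_continuous_def by blast
  then obtain r where r0: "\<forall>x. r x > 0 \<and> (\<forall>x'. dist x' x < r x \<longrightarrow> (\<integral>y. \<bar>a x' y - a x y\<bar> \<partial>\<mu>) < \<delta>)"
    by (rule choice[THEN exE]) blast
  have r: "\<And>x. r x > 0" "\<And>x x'. dist x' x < r x \<Longrightarrow> (\<integral>y. \<bar>a x' y - a x y\<bar> \<partial>\<mu>) < \<delta>"
    using r0 by auto
  have "\<And>S. S \<in> range (\<lambda>x. ball x (r x)) \<Longrightarrow> open S" by auto
  from Lindelof[OF this] obtain F' where F': "F' \<subseteq> range (\<lambda>x. ball x (r x))" "countable F'"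
    "\<Union>F' = \<Union>(range (\<lambda>x. ball x (r x)))" by blast
  have "\<exists>X. countable X \<and> X \<subseteq> UNIV \<and> F' = (\<lambda>x. ball x (r x)) ` X"
    using countable_subset_image[of F' "\<lambda>x. ball x (r x)" UNIV] F'(1,2) by simp
  then obtain X where X: "countable X" "F' = (\<lambda>x. ball x (r x)) ` X"
    by blast
  have covU: "(\<Union>x\<in>X. ball x (r x)) = UNIV"
  proof -
    have "x \<in> \<Union>(range (\<lambda>x. ball x (r x)))" for x
      by (rule UN_I[of x]) (auto simp: r(1))
    then show ?thesis using F'(3) X(2) by auto
  qed
  then have "X \<noteq> {}" by auto
  define e where "e = from_nat_into X"
  have range_e: "range e = X" unfolding e_def using X \<open>X \<noteq> {}\<close> by (simp add: range_from_nat_into)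
  define B where "B k = ball (e k) (r (e k))" for k
  have covB: "(\<Union>k. B k) = UNIV" 
  proof -
    have "(\<Union>k. B k) = (\<Union>x\<in>range e. ball x (r x))" unfolding B_def by auto
    then show ?thesis using covU range_e by simp
  qed
  have B_sets: "B k \<in> sets \<mu>" for k unfolding B_def sets_mu by simp
  define A where "A = disjointed B"
  have A_sets: "A k \<in> sets \<mu>" for k
    using sets.range_disjointed_sets[of B \<mu>] B_sets unfolding A_def by (simp add: image_subset_iff)
  have A_disj: "disjoint_family_on A {..<M}" for M
    by (rule disjoint_family_on_mono[OF subset_UNIV]) (simp add: A_def disjoint_family_disjointed)
  have close: "(\<integral>y. \<bar>a x y - a (e k) y\<bar> \<partial>\<mu>) \<le> \<delta>" if "x \<in> A k" for k x
  proof -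
    have "x \<in> B k" using that disjointed_subset[of B k] unfolding A_def by blast
    then have "dist x (e k) < r (e k)" unfolding B_def by (simp add: dist_commute)
    from r(2)[OF this] show ?thesis by simp
  qed
  have UA: "(\<Union>k<M. A k) = (\<Union>k<M. B k)" for M
    using finite_UN_disjointed_eq[of B M] unfolding A_def by (simp add: atLeast0LessThan)
  define f where "f M x = indicator (- (\<Union>k<M. B k)) x * g x" for M x
  have g_meas[measurable]: "g \<in> borel_measurable \<mu>" using g_int by auto
  have lim: "(\<lambda>M. \<integral>x. f M x \<partial>\<mu>) \<longlonglongrightarrow> (\<integral>x. 0 \<partial>\<mu>)"
  proof (rule integral_dominated_convergence[where w=g])
    show "(\<lambda>x. 0::real) \<in> borel_measurable \<mu>" by simp
    show "f M \<in> borel_measurable \<mu>" for M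
    proof -
      have "(\<Union>k<M. B k) \<in> sets \<mu>" using B_sets by auto
      moreover have "space \<mu> = UNIV" using sets_eq_imp_space_eq[OF sets_mu] by simp
      ultimately have "- (\<Union>k<M. B k) \<in> sets \<mu>"
        using sets.compl_sets[of "\<Union>k<M. B k" \<mu>] by (simp only: Compl_eq_Diff_UNIV)
      then show ?thesis unfolding f_def by measurable
    qed
    show "integrable \<mu> g" by fact
    show "AE x in \<mu>. (\<lambda>M. f M x) \<longlonglongrightarrow> 0"
    proof (intro AE_I2)
      fix x
      obtain j where "x \<in> B j" using covB by blast
      then have "\<forall>M\<ge>Suc j. f M x = 0" unfolding f_def
        by (auto simp: indicator_def intro!: bexI[of _ j])
      then show "(\<lambda>M. f M x) \<longlonglongrightarrow> 0"
        by (intro tendsto_eventually) (auto simp: eventually_sequentially)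
    qed
    show "AE x in \<mu>. norm (f M x) \<le> g x" for M
      by (intro AE_I2) (auto simp: f_def indicator_def g_nn)
  qed
  then have "eventually (\<lambda>M. (\<integral>x. f M x \<partial>\<mu>) < \<delta>) sequentially"
    using \<delta> by (intro order_tendstoD) auto
  then obtain M where M: "(\<integral>x. f M x \<partial>\<mu>) < \<delta>"
    by (auto simp: eventually_sequentially)
  have tail: "(\<integral>x. indicator (- (\<Union>k<M. A k)) x * g x \<partial>\<mu>) \<le> \<delta>"
    using M unfolding f_def UA by (rule less_imp_le)
  have close': "(\<integral>y. \<bar>a x y - a (e k) y\<bar> \<partial>\<mu>) \<le> \<delta>" if "k < M" "x \<in> A k" for k x
    using close[OF that(2)] .
  show ?thesis by (rule that[OF A_sets A_disj close' tail])
qed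

lemma prob_space_dens:
  assumes "prob_density \<mu> h"
  shows "prob_space (density \<mu> (\<lambda>x. ennreal (h x)))"
proof
  have "emeasure (density \<mu> (\<lambda>x. ennreal (h x))) (space (density \<mu> (\<lambda>x. ennreal (h x))))
      = (\<integral>\<^sup>+x. ennreal (h x) \<partial>\<mu>)"
    using assms by (simp add: prob_density_def emeasure_density)
  also have "\<dots> = 1"
    using assms nn_integral_eq_integral[of \<mu> h] by (simp add: prob_density_def)
  finally show "emeasure (density \<mu> (\<lambda>x. ennreal (h x))) (space (density \<mu> (\<lambda>x. ennreal (h x)))) = 1" .
qed

lemma prob_space_sample_law:
  assumes "prob_density \<mu> h"
  shows "prob_space (sample_law \<mu> h N)"
  unfolding sample_law_def by (intro prob_space_PiM prob_space_dens assms)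

lemma sample_law_component_distr:
  assumes "prob_density \<mu> h" "i < N"
  shows "distr (sample_law \<mu> h N) (density \<mu> (\<lambda>x. ennreal (h x))) (\<lambda>xs. xs i) = density \<mu> (\<lambda>x. ennreal (h x))"
  unfolding sample_law_def using assms by (intro distr_PiM_component prob_space_dens) auto

lemma sample_law_component_meas:
  assumes "i < N"
  shows "(\<lambda>xs. xs i) \<in> measurable (sample_law \<mu> h N) \<mu>"
proof -
  have "(\<lambda>xs. xs i) \<in> measurable (sample_law \<mu> h N) (density \<mu> (\<lambda>x. ennreal (h x)))"
    unfolding sample_law_def using assms by (intro measurable_component_singleton) auto
  then show ?thesis
    using measurable_cong_sets[of "sample_law \<mu> h N" "sample_law \<mu> h N" "density \<mu> (\<lambda>x. ennreal (h x))" \<mu>] by simp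
qed

lemma sample_law_indep:
  assumes hd: "prob_density \<mu> h" and N: "1 \<le> N"
  shows "prob_space.indep_vars (sample_law \<mu> h N) (\<lambda>_. density \<mu> (\<lambda>x. ennreal (h x))) (\<lambda>i xs. xs i) {..<N}"
proof -
  define P where "P = density \<mu> (\<lambda>x. ennreal (h x))"
  interpret S: prob_space "sample_law \<mu> h N" by (rule prob_space_sample_law[OF hd])
  have "0 \<in> {..<N}" using N by simp
  then have ne: "{..<N} \<noteq> {}" by blast
  have rv: "(\<lambda>xs. xs i) \<in> measurable (sample_law \<mu> h N) P" if "i \<in> {..<N}" for i
    unfolding sample_law_def P_def using that by (intro measurable_component_singleton) auto
  have "distr (sample_law \<mu> h N) (\<Pi>\<^sub>M i\<in>{..<N}. P) (\<lambda>x. \<lambda>i\<in>{..<N}. x i) = distr (sample_law \<mu> h N) (sample_law \<mu> h N) (\<lambda>x. x)"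
    unfolding sample_law_def P_def
    by (intro distr_cong) (auto simp: space_PiM PiE_def extensional_restrict)
  also have "\<dots> = sample_law \<mu> h N" by simp
  also have "\<dots> = (\<Pi>\<^sub>M i\<in>{..<N}. distr (sample_law \<mu> h N) P (\<lambda>xs. xs i))"
  proof -
    have "(\<Pi>\<^sub>M i\<in>{..<N}. distr (sample_law \<mu> h N) P (\<lambda>xs. xs i)) = (\<Pi>\<^sub>M i\<in>{..<N}. P)"
      by (rule PiM_cong) (auto simp: P_def sample_law_component_distr[OF hd])
    then show ?thesis by (simp add: sample_law_def P_def)
  qed
  finally show ?thesis
    using S.indep_vars_iff_distr_eq_PiM'[OF ne rv] unfolding P_def by simp
qed

lemma sample_expectation:
  assumes hd: "prob_density \<mu> h" and i: "i < N" and f[measurable]: "f \<in> borel_measurable \<mu>"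
  shows "(\<integral>xs. f (xs i) \<partial>sample_law \<mu> h N) = (\<integral>x. h x * f x \<partial>\<mu>)"
proof -
  define P where "P = density \<mu> (\<lambda>x. ennreal (h x))"
  have fP: "f \<in> borel_measurable P"
    using f unfolding P_def by (simp cong: measurable_cong_sets)
  have m: "(\<lambda>xs. xs i) \<in> measurable (sample_law \<mu> h N) P"
    unfolding sample_law_def P_def using i by (intro measurable_component_singleton) auto
  have "(\<integral>xs. f (xs i) \<partial>sample_law \<mu> h N) = (\<integral>x. f x \<partial>distr (sample_law \<mu> h N) P (\<lambda>xs. xs i))"
    by (rule integral_distr[symmetric, OF m fP])
  also have "distr (sample_law \<mu> h N) P (\<lambda>xs. xs i) = P"
    unfolding P_def by (rule sample_law_component_distr[OF hd i])
  also have "(\<integral>x. f x \<partial>P) = (\<integral>x. h x * f x \<partial>\<mu>)"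
    unfolding P_def using hd by (subst integral_density) (auto simp: prob_density_def)
  finally show ?thesis .
qed

lemma sample_hoeffding:
  assumes hd: "prob_density \<mu> h" and N: "1 \<le> N" and f[measurable]: "f \<in> borel_measurable \<mu>"
    and f0: "\<And>x. 0 \<le> f x" and fB: "\<And>x. f x \<le> Bb" and Bb: "0 < Bb" and \<eta>: "0 \<le> \<eta>"
  shows "measure (sample_law \<mu> h N) {xs \<in> space (sample_law \<mu> h N).
            \<bar>(\<Sum>i<N. f (xs i)) - real N * (\<integral>x. h x * f x \<partial>\<mu>)\<bar> \<ge> real N * \<eta>}
         \<le> 2 * exp (- 2 * real N * \<eta>\<^sup>2 / Bb\<^sup>2)"
proof -
  define P where "P = density \<mu> (\<lambda>x. ennreal (h x))"
  interpret S: prob_space "sample_law \<mu> h N" by (rule prob_space_sample_law[OF hd])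
  have fP: "f \<in> measurable P borel"
    using f unfolding P_def by (simp cong: measurable_cong_sets)
  have ind: "S.indep_vars (\<lambda>_. borel) (\<lambda>i xs. f (xs i)) {..<N}"
    using S.indep_vars_compose2[OF sample_law_indep[OF hd N], of "\<lambda>_. f" "\<lambda>_. borel"] fP
    unfolding P_def by simp
  have E: "S.expectation (\<lambda>xs. f (xs i)) = (\<integral>x. h x * f x \<partial>\<mu>)" if "i \<in> {..<N}" for i
    using sample_expectation[OF hd _ f] that by simp
  interpret H: Hoeffding_ineq "sample_law \<mu> h N" "{..<N}" "\<lambda>i xs. f (xs i)" "\<lambda>_. 0" "\<lambda>_. Bb"
      "real N * (\<integral>x. h x * f x \<partial>\<mu>)"
  proof unfold_locales
    show "finite {..<N}" by simp
    show "S.indep_vars (\<lambda>_. borel) (\<lambda>i xs. f (xs i)) {..<N}" by (rule ind)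
    show "AE x in sample_law \<mu> h N. f (x i) \<in> {0..Bb}" if "i \<in> {..<N}" for i
      using f0 fB by auto
    show "real N * (\<integral>x. h x * f x \<partial>\<mu>) \<equiv> (\<Sum>i<N. S.expectation (\<lambda>xs. f (xs i)))"
      using E by simp
  qed
  have pos: "(\<Sum>i<N. (Bb - 0)\<^sup>2) > 0" using N Bb by simp
  have "0 \<le> real N * \<eta>" using \<eta> by simp
  from H.Hoeffding_ineq_abs_ge[OF this pos]
  have "S.prob {xs \<in> space (sample_law \<mu> h N). real N * \<eta> \<le> \<bar>(\<Sum>i<N. f (xs i)) - real N * (\<integral>x. h x * f x \<partial>\<mu>)\<bar>}
     \<le> 2 * exp (- 2 * (real N * \<eta>)\<^sup>2 / (\<Sum>i<N. (Bb - 0)\<^sup>2))" .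
  also have "- 2 * (real N * \<eta>)\<^sup>2 / (\<Sum>i<N. (Bb - 0)\<^sup>2) = - 2 * real N * \<eta>\<^sup>2 / Bb\<^sup>2"
    using N Bb by (simp add: power2_eq_square field_simps)
  finally show ?thesis .
qed

lemma ratio_bound:
  fixes e E \<beta> Z \<eta> :: real
  assumes Z: "0 < Z" and b0: "0 \<le> \<beta>" and bZ: "\<beta> \<le> Z" and e: "\<bar>e - \<beta>\<bar> < \<eta>"
    and E: "\<bar>E - Z\<bar> < \<eta>" and \<eta>: "\<eta> \<le> Z / 2"
  shows "\<bar>e / E - \<beta> / Z\<bar> \<le> 4 * \<eta> / Z"
proof -
  have E2: "Z / 2 < E" using E \<eta> by linarith
  then have Ep: "0 < E" using Z by linarith
  have eq: "e / E - \<beta> / Z = ((e - \<beta>) * Z + \<beta> * (Z - E)) / (E * Z)"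
    using Ep Z by (simp add: field_simps)
  have "\<bar>(e - \<beta>) * Z + \<beta> * (Z - E)\<bar> \<le> \<bar>e - \<beta>\<bar> * Z + \<beta> * \<bar>Z - E\<bar>"
    using Z b0 by (metis abs_mult abs_of_nonneg abs_triangle_ineq less_imp_le)
  also have "\<dots> \<le> \<eta> * Z + Z * \<eta>"
    using e E Z b0 bZ by (intro add_mono mult_mono) (auto simp: abs_minus_commute)
  finally have num: "\<bar>(e - \<beta>) * Z + \<beta> * (Z - E)\<bar> \<le> 2 * \<eta> * Z" by (simp add: mult_ac)
  have "\<bar>e / E - \<beta> / Z\<bar> = \<bar>(e - \<beta>) * Z + \<beta> * (Z - E)\<bar> / (E * Z)"
    using Ep Z by (simp add: eq abs_div)
  also have "\<dots> \<le> 2 * \<eta> * Z / (E * Z)"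
    using num Ep Z by (intro divide_right_mono) auto
  also have "\<dots> = 2 * \<eta> / E" using Z by simp
  also have "\<dots> \<le> 2 * \<eta> / (Z / 2)"
  proof -
    have "0 \<le> \<eta>" using e by linarith
    then show ?thesis using E2 Z by (intro divide_left_mono) auto
  qed
  also have "\<dots> = 4 * \<eta> / Z" by simp
  finally show ?thesis .
qed

context kern begin

lemma L1_meas:
  fixes G :: "'a \<Rightarrow> real" and N :: nat
  assumes G[measurable]: "G \<in> borel_measurable \<mu>"
  shows "(\<lambda>p. \<integral>y. \<bar>Astar_emp a N (fst p) (snd p) y - G y\<bar> \<partial>\<mu>)
           \<in> borel_measurable (sample_law \<mu> h N \<Otimes>\<^sub>M mult_space N)"
proof -
  let ?Q = "(sample_law \<mu> h N \<Otimes>\<^sub>M mult_space N) \<Otimes>\<^sub>M \<mu>"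
  have c1: "(\<lambda>q. fst (fst q) i) \<in> measurable ?Q \<mu>" if "i < N" for i
    by (rule measurable_compose[OF measurable_compose[OF measurable_fst measurable_fst] sample_law_component_meas[where \<mu>=\<mu> and h=h, OF that]])
  have c2: "(\<lambda>q. real (snd (fst q) i)) \<in> borel_measurable ?Q" if "i < N" for i
  proof -
    have "(\<lambda>n. n i) \<in> measurable (mult_space N) (count_space UNIV)"
      unfolding mult_space_def using that by (intro measurable_component_singleton) auto
    then have "(\<lambda>n. real (n i)) \<in> borel_measurable (mult_space N)"
      by (rule measurable_compose) simp
    from measurable_compose[OF measurable_compose[OF measurable_fst measurable_snd] this] show ?thesis .
  qed
  have sm[measurable]: "(\<lambda>q. \<Sum>i<N. real (snd (fst q) i) * a (fst (fst q) i) (snd q)) \<in> borel_measurable ?Q"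
  proof (rule borel_measurable_sum)
    fix i assume "i \<in> {..<N}"
    then have i: "i < N" by simp
    have [measurable]: "(\<lambda>q. a (fst (fst q) i) (snd q)) \<in> borel_measurable ?Q"
      by (rule a_meas'[OF c1[OF i]]) measurable
    have [measurable]: "(\<lambda>q. real (snd (fst q) i)) \<in> borel_measurable ?Q" by (rule c2[OF i])
    show "(\<lambda>q. real (snd (fst q) i) * a (fst (fst q) i) (snd q)) \<in> borel_measurable ?Q"
      by measurable
  qed
  have "(\<lambda>q. Astar_emp a N (fst (fst q)) (snd (fst q)) (snd q)) \<in> borel_measurable ?Q"
    unfolding Astar_emp_def by measurable
  then have "(\<lambda>(p, y). \<bar>Astar_emp a N (fst p) (snd p) y - G y\<bar>) \<in> borel_measurable ?Q"
    unfolding case_prod_beta by measurable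
  then show ?thesis by (rule S.borel_measurable_lebesgue_integral)
qed

end

lemma sample_sum_meas:
  fixes f :: "'a \<Rightarrow> real"
  assumes [measurable]: "f \<in> borel_measurable \<mu>"
  shows "(\<lambda>xs. \<Sum>i<N. f (xs i)) \<in> borel_measurable (sample_law \<mu> h N)"
proof (rule borel_measurable_sum)
  fix i assume "i \<in> {..<N}"
  then have i: "i < N" by simp
  show "(\<lambda>xs. f (xs i)) \<in> borel_measurable (sample_law \<mu> h N)"
    by (rule measurable_compose[OF sample_law_component_meas[OF i]]) simp
qed

lemma mult_comp_meas:
  assumes "j < N"
  shows "(\<lambda>n. real (n j)) \<in> borel_measurable (mult_space N)"
proof -
  have "(\<lambda>n. n j) \<in> measurable (mult_space N) (count_space UNIV)"
    unfolding mult_space_def using assms by (intro measurable_component_singleton) auto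
  then show ?thesis by (rule measurable_compose) simp
qed

lemma mult_sum_meas:
  fixes r :: "nat \<Rightarrow> real"
  assumes "J \<subseteq> {..<N}"
  shows "(\<lambda>n. \<Sum>j\<in>J. (real (n j) / real N - r j)) \<in> borel_measurable (mult_space N)"
proof (rule borel_measurable_sum)
  fix j assume "j \<in> J"
  then have j: "j < N" using assms by auto
  show "(\<lambda>n. real (n j) / real N - r j) \<in> borel_measurable (mult_space N)"
    using mult_comp_meas[OF j] by measurable
qed

theorem lemma9:
  fixes \<mu> :: "'a::polish_space measure"
    and a :: "'a \<Rightarrow> 'a \<Rightarrow> real"
    and h b :: "'a \<Rightarrow> real"
    and K :: "nat \<Rightarrow> (nat \<Rightarrow> 'a) \<Rightarrow> (nat \<Rightarrow> nat) measure"
    and c1 c2 :: real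
  assumes sets_mu: "sets \<mu> = sets borel"
    and sigma_fin: "sigma_finite_measure \<mu>"
    and a_td: "transition_density \<mu> a"
    and a_cont: "L1_continuous \<mu> a"
    and h_dens: "prob_density \<mu> h"
    and b_meas: "b \<in> borel_measurable \<mu>"
    and b_nonneg: "\<forall>x. 0 \<le> b x"
    and bh_int: "integrable \<mu> (\<lambda>x. b x * h x)"
    and bh_pos: "0 < (\<integral>x. b x * h x \<partial>\<mu>)"
    and b_sup: "bdd_above (range (\<lambda>x. b x / (\<integral>y. b y * h y \<partial>\<mu>)))"
    and K_kernel: "\<forall>N. K N \<in> measurable (sample_law \<mu> h N) (prob_algebra (mult_space N))"
    and c2_pos: "0 < c2"
    and K_props: "\<forall>N. AE xs in sample_law \<mu> h N.
        (AE n in K N xs. (\<Sum>i<N. n i) = N) \<and>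
        (0 < (\<Sum>k<N. b (xs k)) \<longrightarrow>
          (\<forall>J \<subseteq> {..<N}. \<forall>\<epsilon>>0.
             measure (K N xs)
               {n \<in> space (mult_space N).
                  \<bar>\<Sum>j\<in>J. real (n j) / real N - resample_prob b N xs j\<bar> > \<epsilon>}
             \<le> c1 * exp (- c2 * real N * \<epsilon>\<^sup>2)))"
  shows "\<forall>\<epsilon>>0. \<exists>C c. 0 < c \<and> (\<forall>N\<ge>1.
     (\<lambda>xs. measure (K N xs)
        {n \<in> space (mult_space N).
           (\<integral>y. \<bar>Astar_emp a N xs n y - Astar \<mu> a (bayes \<mu> h b) y\<bar> \<partial>\<mu>) > \<epsilon>})
       \<in> borel_measurable (sample_law \<mu> h N) \<and>
     (\<integral>\<^sup>+ xs. ennreal (measure (K N xs)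
        {n \<in> space (mult_space N).
           (\<integral>y. \<bar>Astar_emp a N xs n y - Astar \<mu> a (bayes \<mu> h b) y\<bar> \<partial>\<mu>) > \<epsilon>})
       \<partial>sample_law \<mu> h N)
     \<le> ennreal (C * exp (- c * real N)))"
proof (intro allI impI)
  fix \<epsilon> :: real assume \<epsilon>: "0 < \<epsilon>"
  have space_mu: "space \<mu> = UNIV" using sets_eq_imp_space_eq[OF sets_mu] by simp
  have a_meas: "(\<lambda>(x, y). a x y) \<in> borel_measurable (\<mu> \<Otimes>\<^sub>M \<mu>)" and a_nn: "\<And>x y. 0 \<le> a x y"
    and a_int: "\<And>x. integrable \<mu> (a x)" and a_one: "\<And>x. (\<integral>y. a x y \<partial>\<mu>) = 1"
    using a_td unfolding transition_density_def by auto
  interpret kern \<mu> a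
    by (rule kern.intro[OF sigma_fin a_meas a_nn a_int a_one space_mu])
  have h_meas[measurable]: "h \<in> borel_measurable \<mu>" and h_nn: "\<And>x. 0 \<le> h x"
    and h_int: "integrable \<mu> h" and h_one: "(\<integral>x. h x \<partial>\<mu>) = 1"
    using h_dens unfolding prob_density_def by auto
  note b_meas[measurable]
  define Z where "Z = (\<integral>x. b x * h x \<partial>\<mu>)"
  have Z: "0 < Z" using bh_pos by (simp add: Z_def)
  obtain U where U: "\<And>x. b x / Z \<le> U"
    using b_sup unfolding bdd_above_def Z_def by auto
  define Bb where "Bb = max 1 (U * Z)"
  have Bb: "0 < Bb" by (simp add: Bb_def)
  have bB: "b x \<le> Bb" for x
  proof -
    have "b x = (b x / Z) * Z" using Z by simp
    also have "\<dots> \<le> U * Z" using U[of x] Z by (intro mult_right_mono) auto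
    finally show ?thesis by (simp add: Bb_def)
  qed
  define g where "g = bayes \<mu> h b"
  have g_eq: "g x = b x * h x / Z" for x
  proof -
    have "(\<lambda>y. h y * b y) = (\<lambda>y. b y * h y)" by (auto simp: fun_eq_iff)
    then show ?thesis by (simp add: g_def bayes_def Z_def mult.commute)
  qed
  have g_fun: "g = (\<lambda>x. b x * h x / Z)" using g_eq by auto
  have g_meas[measurable]: "g \<in> borel_measurable \<mu>" unfolding g_fun by measurable
  have g_nn: "\<And>x. 0 \<le> g x" unfolding g_eq using Z b_nonneg h_nn by auto
  have g_int: "integrable \<mu> g" unfolding g_fun using bh_int by simp
  have g_one: "(\<integral>x. g x \<partial>\<mu>) = 1" unfolding g_fun using Z by (simp add: Z_def[symmetric])
  define \<delta> where "\<delta> = \<epsilon> / 8"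
  have \<delta>: "0 < \<delta>" using \<epsilon> by (simp add: \<delta>_def)
  obtain A and M :: nat and s where A_sets: "\<And>k. A k \<in> sets \<mu>" and A_disj: "disjoint_family_on A {..<M}"
    and close: "\<And>k x. k < M \<Longrightarrow> x \<in> A k \<Longrightarrow> (\<integral>y. \<bar>a x y - a (s k) y\<bar> \<partial>\<mu>) \<le> \<delta>"
    and tail: "(\<integral>x. indicator (- (\<Union>k<M. A k)) x * g x \<partial>\<mu>) \<le> \<delta>"
    by (rule partition_exists[OF sets_mu a_cont \<delta> g_int g_nn]) blast
  define \<eta>1 where "\<eta>1 = \<epsilon> / (8 * (real M + 1))"
  have \<eta>1: "0 < \<eta>1" using \<epsilon> by (simp add: \<eta>1_def)
  define \<eta> where "\<eta> = min (Z / 2) (\<eta>1 * Z / 4)"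
  have \<eta>: "0 < \<eta>" using Z \<eta>1 by (simp add: \<eta>_def)
  define \<beta> where "\<beta> k = (\<integral>x. h x * (indicator (A k) x * b x) \<partial>\<mu>)" for k
  define fk where "fk k x = indicator (A k) x * b x" for k x
  have fk_meas[measurable]: "fk k \<in> borel_measurable \<mu>" for k
    unfolding fk_def using A_sets by measurable
  have fk_nn: "0 \<le> fk k x" for k x by (simp add: fk_def b_nonneg)
  have fk_B: "fk k x \<le> Bb" for k x
    using bB[of x] b_nonneg[rule_format, of x] Bb by (auto simp: fk_def indicator_def)
  have \<beta>_nn: "0 \<le> \<beta> k" for k unfolding \<beta>_def
    by (intro integral_nonneg_AE AE_I2) (simp add: h_nn b_nonneg)
  have \<beta>_fun: "(\<lambda>x. h x * (indicator (A k) x * b x)) = (\<lambda>x. indicator (A k) x * (b x * h x))" for k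
    by (auto simp: fun_eq_iff)
  have \<beta>_int: "integrable \<mu> (\<lambda>x. h x * (indicator (A k) x * b x))" for k
    unfolding \<beta>_fun by (rule int_ind[OF A_sets bh_int])
  have \<beta>_le: "\<beta> k \<le> Z" for k
    unfolding \<beta>_def Z_def
  proof (rule integral_mono[OF \<beta>_int bh_int])
    fix x
    show "h x * (indicator (A k) x * b x) \<le> b x * h x"
      using h_nn[of x] b_nonneg by (auto simp: indicator_def)
  qed
  have gk_eq: "(\<integral>x. indicator (A k) x * g x \<partial>\<mu>) = \<beta> k / Z" for k
  proof -
    have "(\<lambda>x. indicator (A k) x * g x) = (\<lambda>x. h x * (indicator (A k) x * b x) / Z)"
      by (auto simp: fun_eq_iff g_eq)
    then show ?thesis by (simp add: \<beta>_def)
  qed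
  have Zh: "(\<integral>x. h x * b x \<partial>\<mu>) = Z"
    unfolding Z_def by (simp add: mult.commute)
  define c where "c = min (2 * \<eta>\<^sup>2 / Bb\<^sup>2) (c2 * \<eta>1\<^sup>2)"
  have c: "0 < c" using \<eta> \<eta>1 Bb c2_pos by (simp add: c_def)
  define C where "C = 2 * (real M + 1) + real M * \<bar>c1\<bar>"
  show "\<exists>C c. 0 < c \<and> (\<forall>N\<ge>1.
     (\<lambda>xs. measure (K N xs)
        {n \<in> space (mult_space N).
           (\<integral>y. \<bar>Astar_emp a N xs n y - Astar \<mu> a (bayes \<mu> h b) y\<bar> \<partial>\<mu>) > \<epsilon>})
       \<in> borel_measurable (sample_law \<mu> h N) \<and>
     (\<integral>\<^sup>+ xs. ennreal (measure (K N xs)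
        {n \<in> space (mult_space N).
           (\<integral>y. \<bar>Astar_emp a N xs n y - Astar \<mu> a (bayes \<mu> h b) y\<bar> \<partial>\<mu>) > \<epsilon>})
       \<partial>sample_law \<mu> h N)
     \<le> ennreal (C * exp (- c * real N)))"
  proof (intro exI conjI allI impI)
    show "0 < c" by (rule c)
    fix N :: nat assume N: "1 \<le> N"
    define F where "F xs = measure (K N xs) {n \<in> space (mult_space N).
           (\<integral>y. \<bar>Astar_emp a N xs n y - Astar \<mu> a g y\<bar> \<partial>\<mu>) > \<epsilon>}" for xs
    have G_meas: "Astar \<mu> a g \<in> borel_measurable \<mu>"
    proof -
      have "(\<lambda>(y, x'). g x' * a x' y) \<in> borel_measurable (\<mu> \<Otimes>\<^sub>M \<mu>)"
        unfolding case_prod_beta by measurable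
      from S.borel_measurable_lebesgue_integral[OF this]
      show ?thesis unfolding Astar_def by (simp add: case_prod_beta)
    qed
    define L where "L p = (\<integral>y. \<bar>Astar_emp a N (fst p) (snd p) y - Astar \<mu> a g y\<bar> \<partial>\<mu>)" for p
    have L_meas[measurable]: "L \<in> borel_measurable (sample_law \<mu> h N \<Otimes>\<^sub>M mult_space N)"
      unfolding L_def by (rule L1_meas[OF G_meas])
    have F_meas: "F \<in> borel_measurable (sample_law \<mu> h N)"
    proof -
      have "(SIGMA xs:space (sample_law \<mu> h N). {n \<in> space (mult_space N). L (xs, n) > \<epsilon>})
          = {p \<in> space (sample_law \<mu> h N \<Otimes>\<^sub>M mult_space N). L p > \<epsilon>}"
        by (auto simp: space_pair_measure)
      also have "\<dots> \<in> sets (sample_law \<mu> h N \<Otimes>\<^sub>M mult_space N)" by measurable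
      finally have "(SIGMA xs:space (sample_law \<mu> h N). {n \<in> space (mult_space N). L (xs, n) > \<epsilon>})
          \<in> sets (sample_law \<mu> h N \<Otimes>\<^sub>M mult_space N)" .
      from measure_measurable_prob_algebra2[OF this K_kernel[rule_format]]
      show ?thesis unfolding F_def L_def by simp
    qed
    have F_bound: "(\<integral>\<^sup>+ xs. ennreal (F xs) \<partial>sample_law \<mu> h N) \<le> ennreal (C * exp (- c * real N))"
    proof -
    interpret SL: prob_space "sample_law \<mu> h N" by (rule prob_space_sample_law[OF h_dens])
    have \<eta>0: "0 \<le> \<eta>" using \<eta> by simp
    define Bk where "Bk k = {xs \<in> space (sample_law \<mu> h N).
        real N * \<eta> \<le> \<bar>(\<Sum>i<N. fk k (xs i)) - real N * \<beta> k\<bar>}" for k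
    define B0 where "B0 = {xs \<in> space (sample_law \<mu> h N).
        real N * \<eta> \<le> \<bar>(\<Sum>i<N. b (xs i)) - real N * Z\<bar>}"
    define Bad where "Bad = (\<Union>k<M. Bk k) \<union> B0"
    define E where "E = 2 * exp (- 2 * real N * \<eta>\<^sup>2 / Bb\<^sup>2)"
    define Kc where "Kc = real M * \<bar>c1\<bar> * exp (- c2 * real N * \<eta>1\<^sup>2)"
    have Kc0: "0 \<le> Kc" by (simp add: Kc_def)
    have Bk_sets: "Bk k \<in> sets (sample_law \<mu> h N)" for k
    proof -
      have [measurable]: "(\<lambda>xs. \<Sum>i<N. fk k (xs i)) \<in> borel_measurable (sample_law \<mu> h N)"
        by (rule sample_sum_meas) simp
      show ?thesis unfolding Bk_def by measurable
    qed
    have B0_sets: "B0 \<in> sets (sample_law \<mu> h N)"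
    proof -
      have [measurable]: "(\<lambda>xs. \<Sum>i<N. b (xs i)) \<in> borel_measurable (sample_law \<mu> h N)"
        by (rule sample_sum_meas) simp
      show ?thesis unfolding B0_def by measurable
    qed
    have Bad_sets: "Bad \<in> sets (sample_law \<mu> h N)"
      unfolding Bad_def using Bk_sets B0_sets by auto
    have Bk_prob: "SL.prob (Bk k) \<le> E" for k
    proof -
      have "(\<integral>x. h x * fk k x \<partial>\<mu>) = \<beta> k" by (simp add: \<beta>_def fk_def)
      then show ?thesis
        using sample_hoeffding[OF h_dens N fk_meas fk_nn fk_B Bb \<eta>0, of k]
        unfolding Bk_def E_def by simp
    qed
    have B0_prob: "SL.prob B0 \<le> E"
      using sample_hoeffding[OF h_dens N b_meas _ bB Bb \<eta>0] b_nonneg Zh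
      unfolding B0_def E_def by simp
    have Bad_prob: "SL.prob Bad \<le> (real M + 1) * E"
    proof -
      have "SL.prob Bad \<le> SL.prob (\<Union>k<M. Bk k) + SL.prob B0"
        unfolding Bad_def by (rule measure_Un_le) (use Bk_sets B0_sets in auto)
      also have "SL.prob (\<Union>k<M. Bk k) \<le> (\<Sum>k<M. SL.prob (Bk k))"
        by (rule SL.finite_measure_subadditive_finite) (use Bk_sets in auto)
      also have "\<dots> \<le> (\<Sum>k<M. E)" by (intro sum_mono Bk_prob)
      finally show ?thesis using B0_prob by (simp add: algebra_simps)
    qed
    have F01: "0 \<le> F xs \<and> F xs \<le> 1" if xs: "xs \<in> space (sample_law \<mu> h N)" for xs
    proof -
      have "K N xs \<in> space (prob_algebra (mult_space N))"
        using measurable_space[OF K_kernel[rule_format] xs] .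
      then interpret KP: prob_space "K N xs" by (simp add: space_prob_algebra)
      show ?thesis unfolding F_def by simp
    qed
    have F_int: "integrable (sample_law \<mu> h N) F"
      by (rule SL.integrable_const_bound[where B=1]) (use F01 F_meas in auto)
    have pw: "AE xs in sample_law \<mu> h N. F xs \<le> indicator Bad xs + Kc"
      using K_props[rule_format, of N] AE_space
    proof eventually_elim
      case (elim xs)
      then have xs: "xs \<in> space (sample_law \<mu> h N)"
        and P1: "AE n in K N xs. (\<Sum>i<N. n i) = N"
        and P2: "0 < (\<Sum>k<N. b (xs k)) \<longrightarrow>
          (\<forall>J \<subseteq> {..<N}. \<forall>\<epsilon>>0.
             measure (K N xs)
               {n \<in> space (mult_space N).
                  \<bar>\<Sum>j\<in>J. real (n j) / real N - resample_prob b N xs j\<bar> > \<epsilon>}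
             \<le> c1 * exp (- c2 * real N * \<epsilon>\<^sup>2))" by auto
      have "K N xs \<in> space (prob_algebra (mult_space N))"
        using measurable_space[OF K_kernel[rule_format] xs] .
      then have sets_K: "sets (K N xs) = sets (mult_space N)" and "prob_space (K N xs)"
        by (auto simp: space_prob_algebra)
      interpret KP: prob_space "K N xs" by fact
      show "F xs \<le> indicator Bad xs + Kc"
      proof (cases "xs \<in> Bad")
        case True
        then show ?thesis using F01[OF xs] Kc0 by simp
      next
        case False
        have goodk: "\<bar>(\<Sum>i<N. fk k (xs i)) - real N * \<beta> k\<bar> < real N * \<eta>" if "k < M" for k
          using False xs that unfolding Bad_def Bk_def by (force simp: not_le)
        have good0: "\<bar>(\<Sum>i<N. b (xs i)) - real N * Z\<bar> < real N * \<eta>"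
          using False xs unfolding Bad_def B0_def by (force simp: not_le)
        define S where "S = (\<Sum>i<N. b (xs i))"
        have Npos: "0 < real N" using N by simp
        have \<eta>Z: "\<eta> \<le> Z / 2" by (simp add: \<eta>_def)
        have Spos: "0 < S"
        proof -
          have "real N * \<eta> \<le> real N * (Z / 2)" using \<eta>Z Npos by (intro mult_left_mono) auto
          moreover have "0 < real N * Z" using Npos Z by simp
          ultimately show ?thesis using good0 unfolding S_def by linarith
        qed
        have Kb: "\<And>J e. J \<subseteq> {..<N} \<Longrightarrow> 0 < e \<Longrightarrow> measure (K N xs)
               {n \<in> space (mult_space N).
                  \<bar>\<Sum>j\<in>J. real (n j) / real N - resample_prob b N xs j\<bar> > e}
             \<le> c1 * exp (- c2 * real N * e\<^sup>2)"
          using P2 Spos unfolding S_def by blast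
        define J where "J k = {j \<in> {..<N}. xs j \<in> A k}" for k
        have J_sub: "J k \<subseteq> {..<N}" for k by (auto simp: J_def)
        define Ek where "Ek k = {n \<in> space (mult_space N).
            \<eta>1 < \<bar>\<Sum>j\<in>J k. real (n j) / real N - resample_prob b N xs j\<bar>}" for k
        have Ek_sets: "Ek k \<in> sets (K N xs)" for k
        proof -
          have [measurable]: "(\<lambda>n. \<Sum>j\<in>J k. real (n j) / real N - resample_prob b N xs j) \<in> borel_measurable (mult_space N)"
            by (rule mult_sum_meas[OF J_sub])
          show ?thesis unfolding sets_K Ek_def by measurable
        qed
        have Ek_le: "measure (K N xs) (Ek k) \<le> c1 * exp (- c2 * real N * \<eta>1\<^sup>2)" for k
          unfolding Ek_def by (rule Kb[OF J_sub \<eta>1])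
        have key: "\<bar>(\<Sum>i<N. real (n i) / real N * indicator (A k) (xs i)) - (\<integral>x. indicator (A k) x * g x \<partial>\<mu>)\<bar> \<le> 2 * \<eta>1"
          if k: "k < M" and nE: "n \<notin> Ek k" and nsp: "n \<in> space (mult_space N)" for k n
        proof -
          define Sk where "Sk = (\<Sum>i<N. fk k (xs i))"
          have sumJ: "(\<Sum>j\<in>J k. f j) = (\<Sum>i<N. indicator (A k) (xs i) * f i)" for f :: "nat \<Rightarrow> real"
          proof -
            have "(\<Sum>i<N. indicator (A k) (xs i) * f i) = (\<Sum>i<N. if xs i \<in> A k then f i else 0)"
              by (intro sum.cong) (auto simp: indicator_def)
            also have "\<dots> = (\<Sum>j\<in>J k. f j)" unfolding J_def by (rule sum.inter_filter[symmetric]) simp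
            finally show ?thesis by (rule sym)
          qed
          have d1: "(\<Sum>j\<in>J k. real (n j) / real N - resample_prob b N xs j)
              = (\<Sum>i<N. real (n i) / real N * indicator (A k) (xs i)) - Sk / S"
          proof -
            have "(\<Sum>j\<in>J k. real (n j) / real N - resample_prob b N xs j)
                = (\<Sum>i<N. indicator (A k) (xs i) * (real (n i) / real N - b (xs i) / S))"
              unfolding sumJ resample_prob_def S_def ..
            also have "\<dots> = (\<Sum>i<N. real (n i) / real N * indicator (A k) (xs i)) - (\<Sum>i<N. fk k (xs i) / S)"
              by (simp add: sum_subtractf right_diff_distrib fk_def mult_ac)
            also have "(\<Sum>i<N. fk k (xs i) / S) = Sk / S"
              unfolding Sk_def by (simp add: sum_divide_distrib)
            finally show ?thesis .
          qed
          have d1b: "\<bar>(\<Sum>i<N. real (n i) / real N * indicator (A k) (xs i)) - Sk / S\<bar> \<le> \<eta>1"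
          proof -
            have "\<not> \<eta>1 < \<bar>\<Sum>j\<in>J k. real (n j) / real N - resample_prob b N xs j\<bar>"
              using nE nsp unfolding Ek_def by auto
            then show ?thesis unfolding d1 by (simp only: not_less)
          qed
          have ratio: "\<bar>Sk / S - \<beta> k / Z\<bar> \<le> \<eta>1"
          proof -
            have e: "\<bar>Sk / real N - \<beta> k\<bar> < \<eta>"
            proof -
              have "\<bar>Sk / real N - \<beta> k\<bar> = \<bar>Sk - real N * \<beta> k\<bar> / real N"
                using Npos by (simp add: field_simps abs_div)
              also have "\<dots> < real N * \<eta> / real N"
                using goodk[OF k] Npos unfolding Sk_def by (intro divide_strict_right_mono) auto
              finally show ?thesis using Npos by simp
            qed
            have E: "\<bar>S / real N - Z\<bar> < \<eta>"
            proof -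
              have "\<bar>S / real N - Z\<bar> = \<bar>S - real N * Z\<bar> / real N"
                using Npos by (simp add: field_simps abs_div)
              also have "\<dots> < real N * \<eta> / real N"
                using good0 Npos unfolding S_def by (intro divide_strict_right_mono) auto
              finally show ?thesis using Npos by simp
            qed
            have r1: "\<bar>(Sk / real N) / (S / real N) - \<beta> k / Z\<bar> \<le> 4 * \<eta> / Z"
              by (rule ratio_bound[OF Z \<beta>_nn \<beta>_le e E \<eta>Z])
            have r2: "(Sk / real N) / (S / real N) = Sk / S" using Npos by simp
            have r3: "4 * \<eta> / Z \<le> \<eta>1"
            proof -
              have "\<eta> \<le> \<eta>1 * Z / 4" by (simp add: \<eta>_def)
              then have "4 * \<eta> \<le> \<eta>1 * Z" by simp
              then show ?thesis using Z by (simp add: divide_le_eq)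
            qed
            show ?thesis using r1 r3 unfolding r2 by linarith
          qed
          show ?thesis unfolding gk_eq using d1b ratio by linarith
        qed
        have M\<eta>1: "real M * \<eta>1 \<le> \<epsilon> / 8"
        proof -
          have pos: "0 < real M + 1" by simp
          have "(real M + 1) * \<eta>1 = \<epsilon> / 8"
            unfolding \<eta>1_def using pos by (simp add: divide_simps)
          then show ?thesis using \<eta>1 by (simp add: algebra_simps)
        qed
        have incl: "AE n in K N xs. n \<in> {n \<in> space (mult_space N).
           (\<integral>y. \<bar>Astar_emp a N xs n y - Astar \<mu> a g y\<bar> \<partial>\<mu>) > \<epsilon>} \<longrightarrow> n \<in> (\<Union>k<M. Ek k)"
          using P1
        proof eventually_elim
          case (elim n)
          show ?case
          proof (intro impI, rule ccontr)
            assume nin: "n \<in> {n \<in> space (mult_space N). (\<integral>y. \<bar>Astar_emp a N xs n y - Astar \<mu> a g y\<bar> \<partial>\<mu>) > \<epsilon>}"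
              and nE: "n \<notin> (\<Union>k<M. Ek k)"
            have nsp: "n \<in> space (mult_space N)" using nin by simp
            have "(\<integral>y. \<bar>Astar_emp a N xs n y - Astar \<mu> a g y\<bar> \<partial>\<mu>) \<le> 4 * \<delta> + 2 * (\<Sum>k<M. \<bar>(\<Sum>i<N. real (n i) / real N * indicator (A k) (xs i))
                              - (\<integral>x. indicator (A k) x * g x \<partial>\<mu>)\<bar>)"
              by (rule L1_core[OF g_meas g_nn g_int g_one A_sets A_disj close tail N elim])
            also have "(\<Sum>k<M. \<bar>(\<Sum>i<N. real (n i) / real N * indicator (A k) (xs i))
                              - (\<integral>x. indicator (A k) x * g x \<partial>\<mu>)\<bar>) \<le> (\<Sum>k<M. 2 * \<eta>1)"
              by (intro sum_mono key) (use nE nsp in auto)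
            also have "4 * \<delta> + 2 * (\<Sum>k<M. 2 * \<eta>1) \<le> \<epsilon>"
              using M\<eta>1 by (simp add: \<delta>_def)
            finally show False using nin by simp
          qed
        qed
        have "F xs \<le> measure (K N xs) (\<Union>k<M. Ek k)"
          unfolding F_def by (rule KP.finite_measure_mono_AE[OF incl]) (use Ek_sets in auto)
        also have "\<dots> \<le> (\<Sum>k<M. measure (K N xs) (Ek k))"
          by (rule KP.finite_measure_subadditive_finite) (use Ek_sets in auto)
        also have "\<dots> \<le> (\<Sum>k<M. c1 * exp (- c2 * real N * \<eta>1\<^sup>2))" by (intro sum_mono Ek_le)
        also have "\<dots> = real M * c1 * exp (- c2 * real N * \<eta>1\<^sup>2)" by simp
        also have "\<dots> \<le> Kc" unfolding Kc_def by (intro mult_right_mono mult_left_mono) auto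
        finally have "F xs \<le> Kc" .
        then show ?thesis using False by (simp add: indicator_def)
      qed
    qed
    have "(\<integral>xs. F xs \<partial>sample_law \<mu> h N) \<le> (\<integral>xs. indicator Bad xs + Kc \<partial>sample_law \<mu> h N)"
      by (rule integral_mono_AE[OF F_int _ pw])
         (intro Bochner_Integration.integrable_add SL.integrable_const integrable_real_indicator Bad_sets;
          simp add: less_top[symmetric] SL.emeasure_finite)
    also have "\<dots> = SL.prob Bad + Kc"
      by (subst Bochner_Integration.integral_add)
         (auto intro!: integrable_real_indicator Bad_sets simp: less_top[symmetric] SL.emeasure_finite
            SL.prob_space Int_absorb2[OF sets.sets_into_space[OF Bad_sets]])
    also have "\<dots> \<le> (real M + 1) * E + Kc" using Bad_prob by simp
    also have "\<dots> \<le> C * exp (- c * real N)"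
    proof -
      have e1: "exp (- 2 * real N * \<eta>\<^sup>2 / Bb\<^sup>2) \<le> exp (- c * real N)"
      proof -
        have "c * real N \<le> (2 * \<eta>\<^sup>2 / Bb\<^sup>2) * real N"
          by (intro mult_right_mono) (auto simp: c_def)
        then show ?thesis by (simp add: mult_ac)
      qed
      have e2: "exp (- c2 * real N * \<eta>1\<^sup>2) \<le> exp (- c * real N)"
      proof -
        have "c * real N \<le> (c2 * \<eta>1\<^sup>2) * real N"
          by (intro mult_right_mono) (auto simp: c_def)
        then show ?thesis by (simp add: mult_ac)
      qed
      have "(real M + 1) * E = (2 * (real M + 1)) * exp (- 2 * real N * \<eta>\<^sup>2 / Bb\<^sup>2)"
        by (simp add: E_def)
      also have "\<dots> \<le> (2 * (real M + 1)) * exp (- c * real N)"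
        by (intro mult_left_mono e1) auto
      finally have "(real M + 1) * E \<le> (2 * (real M + 1)) * exp (- c * real N)" .
      moreover have "Kc \<le> (real M * \<bar>c1\<bar>) * exp (- c * real N)"
        unfolding Kc_def using e2 by (intro mult_left_mono) auto
      ultimately show ?thesis unfolding C_def by (simp add: algebra_simps)
    qed
    finally have intF: "(\<integral>xs. F xs \<partial>sample_law \<mu> h N) \<le> C * exp (- c * real N)" .
    have "(\<integral>\<^sup>+ xs. ennreal (F xs) \<partial>sample_law \<mu> h N) = ennreal (\<integral>xs. F xs \<partial>sample_law \<mu> h N)"
      by (rule nn_integral_eq_integral[OF F_int]) (use F01 in \<open>auto intro!: AE_I2\<close>)
    also have "\<dots> \<le> ennreal (C * exp (- c * real N))" using intF by (rule ennreal_leI)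
    finally show ?thesis .
    qed
    show "(\<lambda>xs. measure (K N xs)
        {n \<in> space (mult_space N).
           (\<integral>y. \<bar>Astar_emp a N xs n y - Astar \<mu> a (bayes \<mu> h b) y\<bar> \<partial>\<mu>) > \<epsilon>})
       \<in> borel_measurable (sample_law \<mu> h N)"
      using F_meas unfolding F_def g_def .
    show "(\<integral>\<^sup>+ xs. ennreal (measure (K N xs)
        {n \<in> space (mult_space N).
           (\<integral>y. \<bar>Astar_emp a N xs n y - Astar \<mu> a (bayes \<mu> h b) y\<bar> \<partial>\<mu>) > \<epsilon>})
       \<partial>sample_law \<mu> h N)
     \<le> ennreal (C * exp (- c * real N))"
      using F_bound unfolding F_def g_def .
  qed
qed

end
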